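(* Let $R$ be a $*$-ring and $e$ a projection in $R$. If $R$ is a generalized weakly Rickart $*$-ring, then so is $eRe$.
   Context: A $*$-ring is an associative ring $R$ with an involution $x\mapsto x^*$ (additive, $(xy)^*=y^*x^*$, $x^{**}=x$). A projection is an element $e$ with $e=e^*=e^2$; $eRe=\{exe: x\in R\}$ is a $*$-subring. In a $*$-ring $S$, a projection $f\in S$ is a generalized right projection of $x\in S$ if there exists $n\in\mathbb N$ with $x^nf=x^n$ and, for all $y\in S$, $x^ny=0$ implies $fy=0$. $S$ is a generalized weakly Rickart $*$-ring if every element of $S$ has a generalized right projection in $S$. *)

theory Defs
  imports Main
begin

text \<open>Rings are associative, not necessarily unital (Isabelle class ring has no 1).
  The involution is an explicit function argument.\<close>

definition star_ring :: "('a::ring \<Rightarrow> 'a) \<Rightarrow> bool" where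
  "star_ring st \<longleftrightarrow>
     (\<forall>x y. st (x + y) = st x + st y) \<and>
     (\<forall>x y. st (x * y) = st y * st x) \<and>
     (\<forall>x. st (st x) = x)"

definition is_projection :: "('a::ring \<Rightarrow> 'a) \<Rightarrow> 'a \<Rightarrow> bool" where
  "is_projection st e \<longleftrightarrow> e = st e \<and> e = e * e"

text \<open>Positive powers in a non-unital ring: npow n x = x^(n+1).\<close>
fun npow :: "nat \<Rightarrow> 'a::ring \<Rightarrow> 'a" where
  "npow 0 x = x"
| "npow (Suc n) x = x * npow n x"

definition corner :: "'a::ring \<Rightarrow> 'a set" where
  "corner e = {e * x * e | x. True}"

definition gen_right_proj :: "('a::ring \<Rightarrow> 'a) \<Rightarrow> 'a set \<Rightarrow> 'a \<Rightarrow> 'a \<Rightarrow> bool" where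
  "gen_right_proj st S x f \<longleftrightarrow>
     f \<in> S \<and> is_projection st f \<and>
     (\<exists>n. npow n x * f = npow n x \<and> (\<forall>y\<in>S. npow n x * y = 0 \<longrightarrow> f * y = 0))"

definition gen_weakly_rickart :: "('a::ring \<Rightarrow> 'a) \<Rightarrow> 'a set \<Rightarrow> bool" where
  "gen_weakly_rickart st S \<longleftrightarrow> (\<forall>x\<in>S. \<exists>f. gen_right_proj st S x f)"

end

theory Submission
  imports Defs
begin

lemma npow_e: "x * e = x \<Longrightarrow> npow n x * e = npow n (x::'a::ring)"
  by (induction n) (auto simp: mult.assoc)

theorem mainTheorem12:
  fixes st :: "'a::ring \<Rightarrow> 'a" and e :: 'a
  assumes "star_ring st"
    and "is_projection st e"
    and "gen_weakly_rickart st UNIV"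
  shows "gen_weakly_rickart st (corner e)"
  unfolding gen_weakly_rickart_def
proof
  fix x assume "x \<in> corner e"
  then obtain z where xz: "x = e * z * e" unfolding corner_def by blast
  have ee: "e * e = e" "st e = e" using assms(2) unfolding is_projection_def by auto
  have mul: "\<And>a b. st (a * b) = st b * st a" using assms(1) unfolding star_ring_def by auto
  have xe: "x * e = x" using xz ee by (simp add: mult.assoc)
  obtain f n where fp: "is_projection st f" and fx: "npow n x * f = npow n x"
    and fy: "\<And>y. npow n x * y = 0 \<Longrightarrow> f * y = 0"
    using assms(3) unfolding gen_weakly_rickart_def gen_right_proj_def by blast
  have ff: "f * f = f" "st f = f" using fp unfolding is_projection_def by auto
  have ne: "npow n x * e = npow n x" using npow_e[OF xe] .
  have "npow n x * (f - e * f) = 0"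
    by (simp add: right_diff_distrib ne flip: mult.assoc)
  hence "f * (f - e * f) = 0" by (rule fy)
  hence fef: "f * e * f = f" using ff by (simp add: right_diff_distrib mult.assoc)
  define g where "g = e * f * e"
  have "gen_right_proj st (corner e) x g"
    unfolding gen_right_proj_def
  proof (intro conjI exI[of _ n] ballI impI)
    show "g \<in> corner e" unfolding g_def corner_def by blast
    have "g * g = e * (f * e * f) * e" unfolding g_def
      by (metis mult.assoc ee(1))
    also have "\<dots> = g" using fef g_def by simp
    finally show "is_projection st g" unfolding is_projection_def g_def
      using ee ff mul by (simp add: mult.assoc)
    show "npow n x * g = npow n x" unfolding g_def
      by (simp add: ne fx flip: mult.assoc)
  next
    fix y assume y: "y \<in> corner e" "npow n x * y = 0"
    then obtain w where yw: "y = e * w * e" unfolding corner_def by blast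
    have "e * y = y" using yw ee by (simp flip: mult.assoc)
    moreover have "f * y = 0" using fy y(2) .
    ultimately show "g * y = 0" unfolding g_def by (metis mult.assoc mult_zero_right)
  qed
  thus "\<exists>f. gen_right_proj st (corner e) x f" by blast
qed

end
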